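(* Let $\alpha\in[0,\pi/2)$, $A,B\in\Pi^n_{s,\alpha}$ and $q\in\mathbb{C}$ with $0<|q|\le1$. Then \[ |q|\,w_q(AB\pm BA)\le 2\sec(\alpha)\min\{w_q(A)\|B\|,\ w_q(B)\|A\|\}. \]
   Context: $M_n$ is the algebra of complex $n\times n$ matrices with the operator norm $\|\cdot\|$. For $|q|\le1$, $w_q(A)=\sup\{|\langle Ax,y\rangle|: \|x\|=\|y\|=1,\ \langle x,y\rangle=q\}$. $W(A)=\{\langle Ax,x\rangle:\|x\|=1\}$, $S_\alpha=\{z:\operatorname{Re}z>0,\ |\operatorname{Im}z|\le\tan(\alpha)\operatorname{Re}z\}$ and $\Pi^n_{s,\alpha}=\{A\in M_n: W(A)\subseteq S_\alpha\}$. *)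

theory Defs
  imports "HOL-Analysis.Analysis"
begin

text \<open>Complex n x n matrices are rendered as complex ^'n ^'n (dimension n = CARD('n)).
  The standard complex inner product, linear in the first argument.\<close>

definition cinner :: "complex ^'n \<Rightarrow> complex ^'n \<Rightarrow> complex" where
  "cinner x y = (\<Sum>i\<in>UNIV. x $ i * cnj (y $ i))"

definition opnorm :: "complex ^'n ^'n \<Rightarrow> real" where
  "opnorm A = onorm (\<lambda>x. A *v x)"

definition qnumrad :: "complex \<Rightarrow> complex ^'n ^'n \<Rightarrow> real" where
  "qnumrad q A = Sup {cmod (cinner (A *v x) y) | x y.
      norm x = 1 \<and> norm y = 1 \<and> cinner x y = q}"

definition numrange :: "complex ^'n ^'n \<Rightarrow> complex set" where
  "numrange A = {cinner (A *v x) x | x. norm x = 1}"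

definition sector :: "real \<Rightarrow> complex set" where
  "sector \<alpha> = {z. Re z > 0 \<and> \<bar>Im z\<bar> \<le> tan \<alpha> * Re z}"

definition Pi_s :: "real \<Rightarrow> (complex ^'n ^'n) set" where
  "Pi_s \<alpha> = {A. numrange A \<subseteq> sector \<alpha>}"

end

theory Submission
  imports Defs
begin

lemma cinner_add_left: "cinner (x + y) z = cinner x z + cinner y z"
  unfolding cinner_def by (simp add: sum.distrib distrib_right)
lemma cinner_add_right: "cinner x (y + z) = cinner x y + cinner x z"
  unfolding cinner_def by (simp add: sum.distrib distrib_left)
lemma cinner_diff_left: "cinner (x - y) z = cinner x z - cinner y z"
  unfolding cinner_def by (simp add: sum_subtractf left_diff_distrib)
lemma cinner_smult_left: "cinner (c *s x) y = c * cinner x y"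
  unfolding cinner_def by (simp add: sum_distrib_left mult.assoc)
lemma cinner_smult_right: "cinner x (c *s y) = cnj c * cinner x y"
  unfolding cinner_def by (simp add: sum_distrib_left mult.left_commute)
lemma cinner_commute: "cinner y x = cnj (cinner x y)"
  unfolding cinner_def by (simp add: mult.commute)
lemma scaleR_vec_smult: "(r::real) *\<^sub>R (x::complex^'n) = complex_of_real r *s x"
  unfolding vec_eq_iff vector_scaleR_component vector_scalar_mult_def vec_lambda_beta by (simp add: scaleR_conv_of_real)
lemma matvec_smult: "(A::complex^'n^'m) *v (c *s x) = c *s (A *v x)"
  by (simp add: vec_eq_iff matrix_vector_mult_def vector_scalar_mult_def sum_distrib_left mult.left_commute)
lemma re_cinner: "Re (cinner x y) = inner x y"
  unfolding cinner_def inner_vec_def by (simp add: inner_complex_def)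
lemma im_cinner_self: "Im (cinner x x) = 0"
  unfolding cinner_def by (simp add: mult.commute)
lemma cinner_self: "cinner x x = complex_of_real ((norm x)^2)"
  by (simp add: complex_eq_iff re_cinner im_cinner_self power2_norm_eq_inner)
lemma norm_smult: "norm (c *s (x::complex^'n)) = cmod c * norm x"
proof -
  have "cinner (c *s x) (c *s x) = c * cnj c * cinner x x"
    by (simp add: cinner_smult_left cinner_smult_right)
  then have "complex_of_real ((norm (c *s x))^2) = c * cnj c * complex_of_real ((norm x)^2)"
    unfolding cinner_self .
  also have "\<dots> = complex_of_real ((cmod c * norm x)^2)"
    by (simp add: complex_norm_square[symmetric] power_mult_distrib)
  finally have "(norm (c *s x))^2 = (cmod c * norm x)^2" using of_real_eq_iff by blast
  then show ?thesis by (simp add: power2_eq_iff_nonneg)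
qed
lemma mult_cnj_cmod: "z * cnj z = complex_of_real (cmod z) * complex_of_real (cmod z)"
  using complex_norm_square[of z] by (simp add: power2_eq_square)
lemma cinner_cs: "cmod (cinner x y) \<le> norm x * norm y"
proof (cases "cinner x y = 0")
  case False
  define c where "c = cinner x y"
  define w where "w = c / cmod c"
  have cw: "cmod w = 1" using False by (simp add: w_def c_def norm_divide)
  have "cinner x (w *s y) = complex_of_real (cmod c)"
    using False by (simp add: cinner_smult_right w_def c_def field_simps)
      (simp add: mult_cnj_cmod)
  then have "cmod c = inner x (w *s y)" by (metis Re_complex_of_real re_cinner)
  also have "\<dots> \<le> norm x * norm (w *s y)" by (rule norm_cauchy_schwarz)
  finally show ?thesis by (simp add: norm_smult cw c_def)
qed simp

lemma cinner_minus_right: "cinner x (- z) = - cinner x z"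
  unfolding cinner_def by (simp add: sum_negf)

lemma cinner_diff_right: "cinner x (y - z) = cinner x y - cinner x z"
  unfolding cinner_def by (simp add: sum_subtractf right_diff_distrib)

lemma opnorm_bound: "norm ((A::complex^'n^'n) *v x) \<le> opnorm A * norm x"
  unfolding opnorm_def by (rule onorm[OF matrix_vector_mul_bounded_linear])

lemma opnorm_le: "(\<And>x. norm ((A::complex^'n^'n) *v x) \<le> b * norm x) \<Longrightarrow> opnorm A \<le> b"
  unfolding opnorm_def by (rule onorm_le)

lemma two_idx: assumes "CARD('n) \<ge> 2" obtains i j :: 'n where "i \<noteq> j"
proof -
  have "\<exists>i j::'n. i \<noteq> j"
  proof (rule ccontr)
    assume "\<not> ?thesis"
    then have "UNIV = {undefined::'n}" by auto
    then have "CARD('n) = card {undefined::'n}" by (simp only:)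
    then have "CARD('n) = 1" by simp
    with assms show False by simp
  qed
  then show ?thesis using that by blast
qed

lemma cinner_axis: "cinner x (axis i 1) = x $ i"
  unfolding cinner_def axis_def by (simp add: if_distrib cong: if_cong)

lemma norm_axis_c: "norm (axis i (1::complex)) = 1"
proof -
  have "complex_of_real ((norm (axis i (1::complex)))^2) = 1"
    using cinner_axis[of "axis i 1" i] by (simp add: cinner_self axis_def)
  then have "(norm (axis i (1::complex)))^2 = 1" by (metis of_real_eq_1_iff)
  then show ?thesis by (simp add: power2_eq_1_iff)
qed

lemma exists_orth:
  fixes x :: "complex^'n"
  assumes "CARD('n) \<ge> 2"
  shows "\<exists>z. norm z = 1 \<and> cinner x z = 0"
proof -
  obtain i j :: 'n where ij: "i \<noteq> j" using two_idx[OF assms] by blast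
  show ?thesis
  proof (cases "x $ i = 0")
    case True
    then show ?thesis by (intro exI[of _ "axis i 1"]) (simp add: cinner_axis norm_axis_c)
  next
    case False
    define w :: "complex^'n" where "w = cnj (x$j) *s axis i 1 + (- cnj (x$i)) *s axis j 1"
    have cw: "cinner x w = 0"
      unfolding w_def by (simp only: cinner_add_right cinner_smult_right cinner_axis) simp
    have "w $ j \<noteq> 0" using ij False by (simp add: w_def vector_scalar_mult_def axis_def)
    then have "w \<noteq> 0" by auto
    then have nw: "norm w > 0" by simp
    define z where "z = complex_of_real (1 / norm w) *s w"
    have "norm z = 1" using nw by (simp add: z_def norm_smult norm_divide)
    moreover have "cinner x z = 0" by (simp add: z_def cinner_smult_right cw)
    ultimately show ?thesis by blast
  qed
qed

lemma qset_bdd: "bdd_above {cmod (cinner (M *v x) y) | x y. norm x = 1 \<and> norm y = 1 \<and> cinner x y = q}"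
proof (rule bdd_aboveI[of _ "opnorm M"])
  fix r assume "r \<in> {cmod (cinner (M *v x) y) | x y. norm x = 1 \<and> norm y = 1 \<and> cinner x y = q}"
  then obtain x y :: "complex^_" where r: "r = cmod (cinner (M *v x) y)" "norm x = 1" "norm y = 1" by blast
  have "r \<le> norm (M *v x) * norm y" using r cinner_cs[of "M *v x" y] by simp
  also have "\<dots> \<le> opnorm M" using opnorm_bound[of M x] r by simp
  finally show "r \<le> opnorm M" .
qed

lemma qnumrad_lower:
  fixes M :: "complex^'n^'n"
  assumes "CARD('n) \<ge> 2" "cmod q \<le> 1" "norm x = 1"
  shows "cmod q * cmod (cinner (M *v x) x) \<le> qnumrad q M"
proof -
  obtain z where z: "norm z = 1" "cinner x z = 0" using exists_orth[OF assms(1)] by blast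
  define s where "s = sqrt (1 - (cmod q)^2)"
  have s2: "s^2 = 1 - (cmod q)^2" using assms(2) norm_ge_zero[of q] by (simp add: s_def power_le_one)
  have xx: "cinner x x = 1" using assms(3) by (simp add: cinner_self)
  have mem: "cmod (cinner (M *v x) (cnj q *s x + complex_of_real s *s e)) \<le> qnumrad q M"
    if e: "norm e = 1" "cinner x e = 0" for e
  proof -
    let ?y = "cnj q *s x + complex_of_real s *s e"
    have "cinner x ?y = q" using e xx by (simp add: cinner_add_right cinner_smult_right)
    moreover have "norm ?y = 1"
    proof -
      have "inner (cnj q *s x) (complex_of_real s *s e) = 0"
        using e by (simp add: re_cinner[symmetric] cinner_smult_right cinner_smult_left)
      then have "(norm ?y)^2 = (norm (cnj q *s x))^2 + (norm (complex_of_real s *s e))^2"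
        by (intro norm_add_Pythagorean) (simp add: orthogonal_def)
      also have "\<dots> = 1" using e assms(3) s2 by (simp add: norm_smult power_mult_distrib)
      finally show ?thesis by (smt (verit) norm_ge_zero power2_eq_1_iff)
    qed
    ultimately show ?thesis unfolding qnumrad_def
      by (intro cSup_upper[OF _ qset_bdd]) (use assms(3) in blast)
  qed
  have m1: "cmod (cinner (M *v x) (cnj q *s x + complex_of_real s *s z)) \<le> qnumrad q M"
    using mem z by blast
  have m2: "cmod (cinner (M *v x) (cnj q *s x + complex_of_real s *s (- z))) \<le> qnumrad q M"
    using mem[of "- z"] z by (simp add: cinner_minus_right)
  define a where "a = q * cinner (M *v x) x"
  define b where "b = complex_of_real s * cinner (M *v x) z"
  have e1: "cinner (M *v x) (cnj q *s x + complex_of_real s *s z) = a + b"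
    by (simp add: a_def b_def cinner_add_right cinner_smult_right)
  have e2: "cinner (M *v x) (cnj q *s x + complex_of_real s *s (- z)) = a - b"
    by (simp add: a_def b_def cinner_add_right cinner_smult_right cinner_minus_right cinner_diff_right)
  have "2 * cmod a = cmod ((a + b) + (a - b))" by (simp add: norm_mult)
  also have "\<dots> \<le> cmod (a+b) + cmod (a-b)" by (rule norm_triangle_ineq)
  finally have "cmod a \<le> qnumrad q M" using m1 m2 e1 e2 by simp
  then show ?thesis by (simp add: a_def norm_mult)
qed

lemma herm_bound:
  assumes H: "\<And>l. cmod l = 1 \<Longrightarrow> 0 \<le> Re (w * (a + cnj l * b + l * c + d))"
  shows "cmod (w * b + cnj (w * c)) \<le> Re (w * (a + d))"
proof -
  define p where "p = w * b + cnj (w * c)"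
  have eq: "Re (w * (a + cnj l * b + l * c + d)) = Re (w * (a + d)) + Re (cnj l * p)" for l
  proof -
    have "Re (cnj l * cnj (w * c)) = Re (w * (l * c))"
      by (simp add: algebra_simps)
    then show ?thesis by (simp add: p_def distrib_left distrib_right mult.left_commute)
  qed
  show ?thesis
  proof (cases "p = 0")
    case True
    have "0 \<le> Re (w * (a + d)) + Re (cnj 1 * p)" using H[of 1] eq[of 1] by simp
    then show ?thesis using True p_def by simp
  next
    case False
    define l where "l = - p / complex_of_real (cmod p)"
    have "cmod l = 1" using False by (simp add: l_def norm_divide)
    have "cnj l * p = - complex_of_real (cmod p)"
      using False by (simp add: l_def mult.commute) (simp add: mult_cnj_cmod)
    then have "Re (cnj l * p) = - cmod p" by simp
    then show ?thesis using H[OF \<open>cmod l = 1\<close>] eq[of l] p_def by simp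
  qed
qed

lemma sector_scalar:
  fixes a b c d :: complex and \<alpha> :: real
  assumes "0 \<le> \<alpha>" "\<alpha> < pi/2"
  and H: "\<And>l. cmod l = 1 \<Longrightarrow> 0 \<le> Re (a + cnj l * b + l * c + d) \<and>
            \<bar>Im (a + cnj l * b + l * c + d)\<bar> \<le> tan \<alpha> * Re (a + cnj l * b + l * c + d)"
  shows "2 * cos \<alpha> * cmod b \<le> Re a + Re d"
proof (cases "\<alpha> = 0")
  case True
  then have Im0: "Im (a + cnj l * b + l * c + d) = 0" if "cmod l = 1" for l
    using H[OF that] by simp
  have "Im (a + d) = 0" using Im0[of 1] Im0[of "-1"] by simp
  have "cmod (\<i> * b + cnj (\<i> * c)) \<le> Re (\<i> * (a + d))"
    by (rule herm_bound) (use Im0 in simp)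
  also have "\<dots> = 0" using \<open>Im (a + d) = 0\<close> by simp
  finally have "\<i> * b + cnj (\<i> * c) = 0" by simp
  then have bc: "cnj c = b" by (simp add: algebra_simps)
  have "cmod (1 * b + cnj (1 * c)) \<le> Re (1 * (a + d))"
    by (rule herm_bound) (use H in simp)
  then show ?thesis using True bc by (simp add: norm_mult)
next
  case False
  then have s: "sin \<alpha> > 0" using assms by (intro sin_gt_zero) auto
  have co: "cos \<alpha> > 0" using assms by (intro cos_gt_zero_pi) auto
  define w where "w = Complex (sin \<alpha>) (cos \<alpha>)"
  have tn: "cos \<alpha> * tan \<alpha> = sin \<alpha>" using co by (simp add: tan_def)
  have secP: "0 \<le> Re (w * z) \<and> 0 \<le> Re (cnj w * z)" if "0 \<le> Re z" "\<bar>Im z\<bar> \<le> tan \<alpha> * Re z" for z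
  proof -
    have "cos \<alpha> * \<bar>Im z\<bar> \<le> cos \<alpha> * (tan \<alpha> * Re z)" using that co by (intro mult_left_mono) auto
    then have "cos \<alpha> * \<bar>Im z\<bar> \<le> sin \<alpha> * Re z" using tn by (simp add: mult.assoc[symmetric])
    then show ?thesis by (simp add: w_def abs_le_iff abs_mult) (use co in \<open>smt (verit) abs_le_iff abs_mult_pos mult.commute\<close>)
  qed
  have P: "cmod (w * b + cnj (w * c)) \<le> Re (w * (a + d))"
    by (rule herm_bound) (use H secP in blast)
  have Q: "cmod (cnj w * b + cnj (cnj w * c)) \<le> Re (cnj w * (a + d))"
    by (rule herm_bound) (use H secP in blast)
  have cm: "cmod (Complex 0 r) = \<bar>r\<bar>" for r by (simp add: cmod_def)
  have cw: "cmod w = 1" by (simp add: w_def cmod_def)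
  have cwc: "cmod (cnj w) = 1" using cw by simp
  have id: "w * (w * b + cnj (w * c)) - cnj w * (cnj w * b + cnj (cnj w * c))
           = Complex 0 (4 * sin \<alpha> * cos \<alpha>) * b"
    by (simp add: w_def complex_eq_iff algebra_simps)
  have "4 * sin \<alpha> * cos \<alpha> * cmod b = cmod (Complex 0 (4 * sin \<alpha> * cos \<alpha>) * b)"
    using s co by (simp add: norm_mult cm)
  also have "\<dots> \<le> cmod (w * (w * b + cnj (w * c))) + cmod (cnj w * (cnj w * b + cnj (cnj w * c)))"
    unfolding id[symmetric] by (rule norm_triangle_ineq4)
  also have "\<dots> = cmod (w * b + cnj (w * c)) + cmod (cnj w * b + cnj (cnj w * c))"
    by (simp only: norm_mult cw cwc mult_1)
  also have "\<dots> \<le> Re (w * (a + d)) + Re (cnj w * (a + d))" using P Q by simp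
  also have "\<dots> = 2 * sin \<alpha> * (Re a + Re d)" by (simp add: w_def algebra_simps)
  finally have "sin \<alpha> * (2 * cos \<alpha> * cmod b) \<le> sin \<alpha> * (Re a + Re d)" by (simp add: algebra_simps)
  then show ?thesis using s by simp
qed

lemma sector_all:
  fixes A :: "complex^'n^'n"
  assumes "A \<in> Pi_s \<alpha>"
  shows "0 \<le> Re (cinner (A *v u) u) \<and> \<bar>Im (cinner (A *v u) u)\<bar> \<le> tan \<alpha> * Re (cinner (A *v u) u)"
proof (cases "u = 0")
  case True
  then show ?thesis by (simp add: cinner_def)
next
  case False
  define v where "v = complex_of_real (1 / norm u) *s u"
  have nv: "norm v = 1" using False by (simp add: v_def norm_smult norm_divide)
  have "cinner (A *v v) v \<in> sector \<alpha>"
    using assms nv unfolding Pi_s_def numrange_def by blast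
  then have sv: "0 \<le> Re (cinner (A *v v) v)" "\<bar>Im (cinner (A *v v) v)\<bar> \<le> tan \<alpha> * Re (cinner (A *v v) v)"
    unfolding sector_def by auto
  have uv: "u = complex_of_real (norm u) *s v" using False
    by (simp add: v_def vec_eq_iff vector_scalar_mult_def)
  have "cinner (A *v u) u = complex_of_real ((norm u)^2) * cinner (A *v v) v"
    by (subst (1 2) uv) (simp add: matvec_smult cinner_smult_left cinner_smult_right power2_eq_square)
  then have re: "Re (cinner (A *v u) u) = (norm u)^2 * Re (cinner (A *v v) v)"
     and im: "Im (cinner (A *v u) u) = (norm u)^2 * Im (cinner (A *v v) v)" by simp_all
  show ?thesis unfolding re im using sv mult_left_mono[OF sv(2), of "(norm u)^2"]
    by (simp add: abs_mult mult.left_commute)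
qed

lemma expand:
  fixes A :: "complex^'n^'n"
  assumes "cmod l = 1"
  shows "cinner (A *v (x + l *s y)) (x + l *s y) =
    cinner (A *v x) x + cnj l * cinner (A *v x) y + l * cinner (A *v y) x + cinner (A *v y) y"
proof -
  have ll: "l * cnj l = 1" using assms by (simp add: mult_cnj_cmod)
  have "cinner (A *v (x + l *s y)) (x + l *s y) =
    cinner (A *v x) x + cnj l * cinner (A *v x) y + l * cinner (A *v y) x + (l * cnj l) * cinner (A *v y) y"
    by (simp add: matrix_vector_right_distrib matvec_smult cinner_add_left cinner_add_right
        cinner_smult_left cinner_smult_right algebra_simps)
  then show ?thesis using ll by simp
qed

lemma unit_bound:
  fixes A :: "complex^'n^'n"
  assumes "A \<in> Pi_s \<alpha>" "0 \<le> \<alpha>" "\<alpha> < pi/2" "norm x = 1" "norm y = 1"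
  shows "2 * cos \<alpha> * cmod (cinner (A *v x) y) \<le> Re (cinner (A *v x) x) + Re (cinner (A *v y) y)"
proof (rule sector_scalar[OF assms(2,3)])
  fix l :: complex assume "cmod l = 1"
  from sector_all[OF assms(1), of "x + l *s y"] expand[OF this, of A x y]
  show "0 \<le> Re (cinner (A *v x) x + cnj l * cinner (A *v x) y + l * cinner (A *v y) x + cinner (A *v y) y) \<and>
    \<bar>Im (cinner (A *v x) x + cnj l * cinner (A *v x) y + l * cinner (A *v y) x + cinner (A *v y) y)\<bar>
    \<le> tan \<alpha> * Re (cinner (A *v x) x + cnj l * cinner (A *v x) y + l * cinner (A *v y) x + cinner (A *v y) y)"
    by simp
qed

lemma opnorm_sector:
  fixes A :: "complex^'n^'n"
  assumes "CARD('n) \<ge> 2" "0 \<le> \<alpha>" "\<alpha> < pi/2" "A \<in> Pi_s \<alpha>" "0 < cmod q" "cmod q \<le> 1"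
  shows "cmod q * cos \<alpha> * opnorm A \<le> qnumrad q A"
proof -
  have co: "cos \<alpha> > 0" using assms by (intro cos_gt_zero_pi) auto
  have low: "cmod q * Re (cinner (A *v u) u) \<le> qnumrad q A" if "norm u = 1" for u
    using qnumrad_lower[OF assms(1,6) that, of A] complex_Re_le_cmod[of "cinner (A *v u) u"] assms(5)
    by (smt (verit) mult_left_mono)
  have unit: "cmod q * cos \<alpha> * norm (A *v x) \<le> qnumrad q A" if "norm x = 1" for x
  proof (cases "A *v x = 0")
    case True
    have "0 \<le> qnumrad q A" using qnumrad_lower[OF assms(1,6) that, of A] assms(5)
      by (smt (verit) mult_nonneg_nonneg norm_ge_zero)
    then show ?thesis using True by simp
  next
    case False
    define y where "y = complex_of_real (1 / norm (A *v x)) *s (A *v x)"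
    have ny: "norm y = 1" using False by (simp add: y_def norm_smult norm_divide)
    have "cinner (A *v x) y = complex_of_real (norm (A *v x))"
      using False by (simp add: y_def cinner_smult_right cinner_self power2_eq_square)
    then have "2 * cos \<alpha> * norm (A *v x) \<le> Re (cinner (A *v x) x) + Re (cinner (A *v y) y)"
      using unit_bound[OF assms(4,2,3) that ny] by simp
    then have "cmod q * (2 * cos \<alpha> * norm (A *v x)) \<le> cmod q * Re (cinner (A *v x) x) + cmod q * Re (cinner (A *v y) y)"
      using assms(5) by (metis distrib_left mult_left_mono norm_ge_zero)
    then show ?thesis using low[OF that] low[OF ny] by (simp add: algebra_simps)
  qed
  have "opnorm A \<le> qnumrad q A / (cmod q * cos \<alpha>)"
  proof (rule opnorm_le)
    fix x :: "complex^'n"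
    show "norm (A *v x) \<le> qnumrad q A / (cmod q * cos \<alpha>) * norm x"
    proof (cases "x = 0")
      case False
      define v where "v = complex_of_real (1 / norm x) *s x"
      have nv: "norm v = 1" using False by (simp add: v_def norm_smult norm_divide)
      have "norm (A *v v) = norm (A *v x) / norm x"
        by (simp add: v_def matvec_smult norm_smult norm_divide)
      then have "cmod q * cos \<alpha> * (norm (A *v x) / norm x) \<le> qnumrad q A" using unit[OF nv] by simp
      then show ?thesis using False co assms(5) by (simp add: field_simps)
    qed simp
  qed
  then show ?thesis using co assms(5) by (simp add: field_simps)
qed

lemma qset_nonempty:
  assumes "CARD('n) \<ge> 2" "cmod q \<le> 1"
  shows "\<exists>x y :: complex^'n. norm x = 1 \<and> norm y = 1 \<and> cinner x y = q"
proof -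
  obtain i :: 'n where True by blast
  define x :: "complex^'n" where "x = axis i 1"
  have nx: "norm x = 1" by (simp add: x_def norm_axis_c)
  have xx: "cinner x x = 1" using nx by (simp add: cinner_self)
  obtain e where e: "norm e = 1" "cinner x e = 0" using exists_orth[OF assms(1)] by blast
  define s where "s = sqrt (1 - (cmod q)^2)"
  have s2: "s^2 = 1 - (cmod q)^2" using assms(2) norm_ge_zero[of q] by (simp add: s_def power_le_one)
  let ?y = "cnj q *s x + complex_of_real s *s e"
  have "cinner x ?y = q" using e xx by (simp add: cinner_add_right cinner_smult_right)
  moreover have "norm ?y = 1"
  proof -
    have "inner (cnj q *s x) (complex_of_real s *s e) = 0"
      using e by (simp add: re_cinner[symmetric] cinner_smult_right cinner_smult_left)
    then have "(norm ?y)^2 = (norm (cnj q *s x))^2 + (norm (complex_of_real s *s e))^2"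
      by (intro norm_add_Pythagorean) (simp add: orthogonal_def)
    also have "\<dots> = 1" using e nx s2 by (simp add: norm_smult power_mult_distrib)
    finally show ?thesis by (smt (verit) norm_ge_zero power2_eq_1_iff)
  qed
  ultimately show ?thesis using nx by blast
qed

lemma qnumrad_le_opnorm:
  fixes M :: "complex^'n^'n"
  assumes "CARD('n) \<ge> 2" "cmod q \<le> 1"
  shows "qnumrad q M \<le> opnorm M"
  unfolding qnumrad_def
proof (rule cSup_least)
  show "{cmod (cinner (M *v x) y) |x y. norm x = 1 \<and> norm y = 1 \<and> cinner x y = q} \<noteq> {}"
    using qset_nonempty[OF assms] by blast
next
  fix r assume "r \<in> {cmod (cinner (M *v x) y) |x y. norm x = 1 \<and> norm y = 1 \<and> cinner x y = q}"
  then obtain x y :: "complex^_" where r: "r = cmod (cinner (M *v x) y)" "norm x = 1" "norm y = 1" by blast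
  have "r \<le> norm (M *v x) * norm y" using r cinner_cs[of "M *v x" y] by simp
  also have "\<dots> \<le> opnorm M" using opnorm_bound[of M x] r by simp
  finally show "r \<le> opnorm M" .
qed

lemma opnorm_nonneg: "0 \<le> opnorm (M::complex^'n^'n)"
  unfolding opnorm_def by (rule onorm_pos_le[OF matrix_vector_mul_bounded_linear])

lemma opnorm_comm:
  fixes A B :: "complex^'n^'n"
  shows "opnorm (A ** B + B ** A) \<le> 2 * opnorm A * opnorm B"
    and "opnorm (A ** B - B ** A) \<le> 2 * opnorm A * opnorm B"
proof -
  have b: "norm (A *v (B *v x)) \<le> opnorm A * opnorm B * norm x"
    and b2: "norm (B *v (A *v x)) \<le> opnorm A * opnorm B * norm x" for x
  proof -
    show "norm (A *v (B *v x)) \<le> opnorm A * opnorm B * norm x"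
      using opnorm_bound[of A "B *v x"] opnorm_bound[of B x] opnorm_nonneg[of A]
      by (smt (verit) mult.assoc mult_left_mono)
    show "norm (B *v (A *v x)) \<le> opnorm A * opnorm B * norm x"
      using opnorm_bound[of B "A *v x"] opnorm_bound[of A x] opnorm_nonneg[of B]
      by (smt (verit) mult.assoc mult.commute mult_left_mono)
  qed
  show "opnorm (A ** B + B ** A) \<le> 2 * opnorm A * opnorm B"
  proof (rule opnorm_le)
    fix x
    have "norm ((A ** B + B ** A) *v x) \<le> norm (A *v (B *v x)) + norm (B *v (A *v x))"
      by (simp add: matrix_vector_mult_add_rdistrib matrix_vector_mul_assoc norm_triangle_ineq)
    then show "norm ((A ** B + B ** A) *v x) \<le> 2 * opnorm A * opnorm B * norm x"
      using b[of x] b2[of x] by simp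
  qed
  show "opnorm (A ** B - B ** A) \<le> 2 * opnorm A * opnorm B"
  proof (rule opnorm_le)
    fix x
    have "norm ((A ** B - B ** A) *v x) \<le> norm (A *v (B *v x)) + norm (B *v (A *v x))"
      by (simp add: matrix_vector_mult_diff_rdistrib matrix_vector_mul_assoc norm_triangle_ineq4)
    then show "norm ((A ** B - B ** A) *v x) \<le> 2 * opnorm A * opnorm B * norm x"
      using b[of x] b2[of x] by simp
  qed
qed

theorem corollary2p20:
  fixes A B :: "complex ^'n ^'n" and q :: complex and \<alpha> :: real
  assumes "CARD('n) \<ge> 2"
    and "0 \<le> \<alpha>" and "\<alpha> < pi / 2"
    and "A \<in> Pi_s \<alpha>" and "B \<in> Pi_s \<alpha>"
    and "0 < cmod q" and "cmod q \<le> 1"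
  shows "cmod q * qnumrad q (A ** B + B ** A)
           \<le> 2 * (1 / cos \<alpha>) * min (qnumrad q A * opnorm B) (qnumrad q B * opnorm A)
       \<and> cmod q * qnumrad q (A ** B - B ** A)
           \<le> 2 * (1 / cos \<alpha>) * min (qnumrad q A * opnorm B) (qnumrad q B * opnorm A)"
proof -
  have co: "cos \<alpha> > 0" using assms by (intro cos_gt_zero_pi) auto
  have sa: "cmod q * cos \<alpha> * opnorm A \<le> qnumrad q A"
    using opnorm_sector[OF assms(1,2,3,4,6,7)] .
  have sb: "cmod q * cos \<alpha> * opnorm B \<le> qnumrad q B"
    using opnorm_sector[OF assms(1,2,3,5,6,7)] .
  have key: "cmod q * qnumrad q C \<le> 2 * (1 / cos \<alpha>) * min (qnumrad q A * opnorm B) (qnumrad q B * opnorm A)"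
    if C: "opnorm C \<le> 2 * opnorm A * opnorm B" for C :: "complex^'n^'n"
  proof -
    have "cmod q * qnumrad q C \<le> cmod q * (2 * opnorm A * opnorm B)"
      using qnumrad_le_opnorm[OF assms(1,7), of C] C assms(6)
      by (smt (verit) mult_left_mono norm_ge_zero)
    also have "\<dots> = 2 * (1 / cos \<alpha>) * ((cmod q * cos \<alpha> * opnorm A) * opnorm B)"
      using co by (simp add: field_simps)
    also have "\<dots> \<le> 2 * (1 / cos \<alpha>) * (qnumrad q A * opnorm B)"
      using sa co opnorm_nonneg[of B] by (intro mult_left_mono mult_right_mono) auto
    finally have 1: "cmod q * qnumrad q C \<le> 2 * (1 / cos \<alpha>) * (qnumrad q A * opnorm B)" .
    have "cmod q * (2 * opnorm A * opnorm B) = 2 * (1 / cos \<alpha>) * ((cmod q * cos \<alpha> * opnorm B) * opnorm A)"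
      using co by (simp add: field_simps)
    also have "\<dots> \<le> 2 * (1 / cos \<alpha>) * (qnumrad q B * opnorm A)"
      using sb co opnorm_nonneg[of A] by (intro mult_left_mono mult_right_mono) auto
    finally have 2: "cmod q * qnumrad q C \<le> 2 * (1 / cos \<alpha>) * (qnumrad q B * opnorm A)"
      using \<open>cmod q * qnumrad q C \<le> cmod q * (2 * opnorm A * opnorm B)\<close> by linarith
    have "min (2 * (1 / cos \<alpha>) * (qnumrad q A * opnorm B)) (2 * (1 / cos \<alpha>) * (qnumrad q B * opnorm A))
      = 2 * (1 / cos \<alpha>) * min (qnumrad q A * opnorm B) (qnumrad q B * opnorm A)"
      using co by (simp add: min_mult_distrib_left)
    then show ?thesis using 1 2 by (metis min.bounded_iff)
  qed
  show ?thesis using key[OF opnorm_comm(1)] key[OF opnorm_comm(2)] by blast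
qed
end
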